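(* Assume the Setting below, let $n$ be the index defined there, let $(n,p,q)\in\Sigma_1$, i.e. $n<2p$ and $n\le q$, and assume that, as $v\to0$, $\Lambda_n(v)=v(\lambda_n+O(v))$ with a constant $\lambda_n\ne0$ and $\Lambda_k(v)=O(v)$ for all $k<2p$. Set $\vartheta_0=(2p-n)/q$, $\kappa_0=\min\{1/q,\vartheta_0\}$, $\xi_0=\mu_{2p}/|\lambda_n+\delta_{n,q}\vartheta_0|$, $\varkappa_0=\min\{\kappa_0,|\lambda_n+\vartheta_0|\}$. Fix an integer $N\in[2p,4p]$. If $\lambda_n+\delta_{n,q}\vartheta_0<0$, then the equation $\frac{du}{dt}=\sum_{k=n}^N t^{-k/q}\Lambda_k(u)$ has a solution $u_0(t)=t^{-\vartheta_0}\zeta_0(t)$, defined for all sufficiently large $t$, such that as $t\to\infty$: $\zeta_0(t)=\xi_0+O(1)$ if $n<q$, and $\zeta_0(t)=\xi_0+O(t^{-(1-\epsilon)\varkappa_0})$ for every $\epsilon\in(0,1)$ if $n=q$.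
   Context: Setting. Let $(\Omega,\mathcal F,\mathbb P)$ carry a 2D Wiener process ${\bf w}$; consider the Itô system $d{\bf z}={\bf a}({\bf z},t)dt+{\bf A}({\bf z},t)d{\bf w}(t)$, $t>s>0$, ${\bf z}=(x,y)^T\in\mathbb R^2$, with deterministic $C^\infty$ coefficients, ${\bf a}(0,t)\equiv0$, ${\bf A}(0,t)\not\equiv0$, globally Lipschitz in ${\bf z}$ uniformly in $t\ge s$ and $\|{\bf A}({\bf z},t)\|\le M(1+|{\bf z}|)$. Assume: ${\bf a}_0=(\partial_yH_0,-\partial_xH_0)^T$ with smooth $H_0=|{\bf z}|^2/2+O(|{\bf z}|^3)$; for some $E_0,r>0$, each level set $\{H_0=E\}\cap\mathcal B_r$, $E\in(0,E_0]$, is a closed curve and the origin is the only equilibrium of $\dot{\bf z}={\bf a}_0({\bf z})$ in $\mathcal B_r=\{|{\bf z}|\le r\}$; ${\bf z}_*(t,E)=(x_*,y_* )$ denotes the periodic solution with $H_0({\bf z}_* )\equiv E$, $x_*(0,E)>0$, $y_*(0,E)=0$, period $2\pi/\nu(E)$, $\nu\ne0$, $\nu(E)=1+O(E)$. There are $q\in\mathbb Z_+$ and smooth ${\bf a}_k,{\bf A}_k$ with ${\bf a}\sim{\bf a}_0+\sum_{k\ge1}t^{-k/q}{\bf a}_k$, ${\bf A}\sim\sum_{k\ge1}t^{-k/q}{\bf A}_k$ as $t\to\infty$ uniformly on $\mathcal B_r$; $p\in\mathbb Z_+$ satisfies ${\bf A}_k(0)=0$ ($k<p$), ${\bf A}_p(0)\neq0$;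 $\mu_{2p}=\frac12\mathrm{tr}({\bf A}_p^T(0){\bf A}_p(0))$. Energy–angle variables: $X(\varphi,E)=x_*(\varphi/\nu(E),E)$, $Y(\varphi,E)=y_*(\varphi/\nu(E),E)$; the inverse map is $E=I(x,y)$, $\varphi=\Phi(x,y)$. Generator: $LU=\partial_tU+(\nabla_{\bf z}U)^T{\bf a}+\frac12\mathrm{tr}({\bf A}^T{\bf H}_{\bf z}(U){\bf A})$, ${\bf H}_{\bf z}$ the Hessian in $(x,y)$. Averaged coefficients: $v_k(E,\varphi)$ ($2\pi$-periodic in $\varphi$ with zero $\varphi$-mean) and $\Lambda_k(E)$ ($k\ge1$) are the functions uniquely determined, order by order in powers of $t^{-1/q}$, by requiring that with $V_N(E,\varphi,t)=E+\sum_{k=1}^Nt^{-k/q}v_k(E,\varphi)$ one has $L[V_N(I(x,y),\Phi(x,y),t)]=\sum_{k=1}^Nt^{-k/q}\Lambda_k(V_N)+O(t^{-(N+1)/q})$ for every $N$ (Taylor-expanding $\Lambda_j(V_N)$ about $E$); in particular $\Lambda_{2p}(E)=\mu_{2p}+O(E)$. The index $n\le2p$ is the smallest integer with $\Lambda_k\equiv0$ for $k<n$ and $\Lambda_n\not\equiv0$. $\delta_{i,j}$ is the Kronecker delta. *)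

theory Defs
  imports "HOL-Analysis.Analysis" "HOL-Library.Landau_Symbols"
begin

definition kdelta :: "nat \<Rightarrow> nat \<Rightarrow> real" where
  "kdelta i j = (if i = j then 1 else 0)"

end

theory Submission
  imports Defs
begin
lemma cont_halfline:
  fixes f :: "real \<Rightarrow> real"
  assumes "\<And>b. b > T \<Longrightarrow> continuous_on {T..b} f"
  shows "continuous_on {T..} f"
  unfolding continuous_on_eq_continuous_within
proof
  fix x assume x: "x \<in> {T..}"
  have "continuous (at x within {T..x+1}) f"
    using assms[of "x+1"] x by (simp add: continuous_on_eq_continuous_within)
  moreover have "at x within {T..} = at x within {T..x+1}"
    by (rule at_within_nhd[of _ "{..<x+1}"]) auto
  ultimately show "continuous (at x within {T..}) f" by simp
qed

lemma ode_exists: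
  fixes F :: "real \<Rightarrow> real \<Rightarrow> real" and T u0 K L :: real
  assumes cont: "\<And>w. continuous_on {T..} w \<Longrightarrow> continuous_on {T..} (\<lambda>s. F s (w s))"
    and bnd: "\<And>t x. t \<ge> T \<Longrightarrow> \<bar>F t x\<bar> \<le> K"
    and lip: "\<And>t x y. t \<ge> T \<Longrightarrow> \<bar>F t x - F t y\<bar> \<le> L * \<bar>x - y\<bar>"
    and L: "L > 0"
  shows "\<exists>u. continuous_on {T..} u \<and> u T = u0 \<and> (\<forall>t>T. (u has_real_derivative F t (u t)) (at t))"
proof -
  have K: "K \<ge> 0" using bnd[of T 0] by simp
  define E where "E s = exp (2*L*(s - T))" for s
  define mx where "mx t = max t T" for t :: real
  have Epos: "E s > 0" for s by (simp add: E_def)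
  have Ege: "E s \<ge> 1 + 2*L*(s-T)" for s unfolding E_def by (rule exp_ge_add_one_self)
  have contE: "continuous_on S E" for S unfolding E_def by (intro continuous_intros)
  have hcont: "continuous_on {T..} (\<lambda>s. F s (E s * apply_bcontfun \<psi> s))" for \<psi> :: "real \<Rightarrow>\<^sub>C real"
    by (rule cont) (intro continuous_intros contE, simp)
  define I where "I \<psi> x = integral {T..x} (\<lambda>s. F s (E s * apply_bcontfun \<psi> s))" for \<psi> x
  define g where "g \<psi> t = (u0 + I \<psi> (mx t)) / E (mx t)" for \<psi> t
  have Icont: "continuous_on {T..} (I \<psi>)" for \<psi>
    unfolding I_def
    by (rule cont_halfline, rule indefinite_integral_continuous_1, rule integrable_continuous_real,
        rule continuous_on_subset[OF hcont]) auto
  have mxcont: "continuous_on UNIV mx" unfolding mx_def by (intro continuous_intros)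
  have mxin: "mx t \<in> {T..}" for t by (simp add: mx_def)
  have gcont: "continuous_on UNIV (g \<psi>)" for \<psi>
  proof -
    have "continuous_on {T..} (\<lambda>x. (u0 + I \<psi> x) / E x)"
      by (intro continuous_intros Icont contE) (simp add: Epos less_imp_neq[symmetric])
    then show ?thesis unfolding g_def
      by (rule continuous_on_compose2[OF _ mxcont]) (auto simp: mxin mx_def)
  qed
  have Ibnd: "\<bar>I \<psi> x\<bar> \<le> K * (x - T)" if "x \<ge> T" for \<psi> x
  proof -
    have "norm (I \<psi> x) \<le> K * Henstock_Kurzweil_Integration.content (cbox T x)"
      unfolding I_def
      by (rule has_integral_bound[OF K]) (auto intro!: integrable_integral integrable_continuous_real
          continuous_on_subset[OF hcont] bnd)
    then show ?thesis using that by simp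
  qed
  have gbnd: "\<bar>g \<psi> t\<bar> \<le> \<bar>u0\<bar> + K / (2*L)" for \<psi> t
  proof -
    let ?x = "mx t"
    have x: "?x \<ge> T" by (simp add: mx_def)
    have E1: "E ?x \<ge> 1" using Ege[of ?x] x L by (smt (verit) mult_nonneg_nonneg)
    have "\<bar>g \<psi> t\<bar> \<le> (\<bar>u0\<bar> + K * (?x - T)) / E ?x"
      unfolding g_def using Ibnd[OF x, of \<psi>] Epos[of ?x]
      by (simp add: abs_divide divide_right_mono)
    also have "\<dots> = \<bar>u0\<bar> / E ?x + K * (?x - T) / E ?x" by (simp add: add_divide_distrib)
    also have "\<bar>u0\<bar> / E ?x \<le> \<bar>u0\<bar>" using E1 by (simp add: divide_le_eq mult_le_cancel_left1)
    also have "K * (?x - T) / E ?x \<le> K / (2*L)"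
    proof -
      have "K * (?x - T) * (2*L) \<le> K * E ?x"
        using Ege[of ?x] K x by (smt (verit) mult_left_mono mult.commute mult.assoc)
      then show ?thesis using Epos[of ?x] L by (simp add: field_simps)
    qed
    finally show ?thesis by simp
  qed
  have gin: "g \<psi> \<in> bcontfun" for \<psi>
    by (rule bcontfun_normI[OF gcont]) (use gbnd in simp)
  define \<Phi> where "\<Phi> \<psi> = Bcontfun (g \<psi>)" for \<psi>
  have \<Phi>app: "apply_bcontfun (\<Phi> \<psi>) = g \<psi>" for \<psi> unfolding \<Phi>_def using gin by (simp add: Bcontfun_inverse)
  have contr: "dist (\<Phi> \<psi>1) (\<Phi> \<psi>2) \<le> (1/2) * dist \<psi>1 \<psi>2" for \<psi>1 \<psi>2
  proof (rule dist_bound)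
    fix t
    let ?x = "mx t"
    let ?d = "dist \<psi>1 \<psi>2"
    have x: "?x \<ge> T" by (simp add: mx_def)
    define h1 where "h1 s = F s (E s * apply_bcontfun \<psi>1 s)" for s
    define h2 where "h2 s = F s (E s * apply_bcontfun \<psi>2 s)" for s
    have i1: "h1 integrable_on {T..?x}" unfolding h1_def
      by (rule integrable_continuous_real, rule continuous_on_subset[OF hcont]) auto
    have i2: "h2 integrable_on {T..?x}" unfolding h2_def
      by (rule integrable_continuous_real, rule continuous_on_subset[OF hcont]) auto
    have pt: "norm (h1 s - h2 s) \<le> L * ?d * E s" if "s \<in> {T..?x}" for s
    proof -
      have "\<bar>h1 s - h2 s\<bar> \<le> L * \<bar>E s * apply_bcontfun \<psi>1 s - E s * apply_bcontfun \<psi>2 s\<bar>"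
        unfolding h1_def h2_def using that by (intro lip) auto
      also have "\<dots> = L * E s * \<bar>apply_bcontfun \<psi>1 s - apply_bcontfun \<psi>2 s\<bar>"
        using Epos[of s] by (simp add: right_diff_distrib[symmetric] abs_mult)
      also have "\<dots> \<le> L * E s * ?d"
        using dist_bounded[of \<psi>1 s \<psi>2] L Epos[of s] by (simp add: dist_real_def)
      finally show ?thesis by (simp add: mult_ac)
    qed
    have ftc: "((\<lambda>s. L * ?d * E s) has_integral (?d * E ?x / 2 - ?d * E T / 2)) {T..?x}"
    proof (rule fundamental_theorem_of_calculus[OF x])
      fix s assume "s \<in> {T..?x}"
      show "((\<lambda>s. ?d * E s / 2) has_vector_derivative L * ?d * E s) (at s within {T..?x})"
        unfolding E_def has_real_derivative_iff_has_vector_derivative[symmetric]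
        by (auto intro!: derivative_eq_intros simp: field_simps)
    qed
    have "norm (integral {T..?x} (\<lambda>s. h1 s - h2 s)) \<le> integral {T..?x} (\<lambda>s. L * ?d * E s)"
      by (rule integral_norm_bound_integral) (use i1 i2 ftc pt integrable_diff[OF i1 i2] in auto)
    also have "\<dots> = ?d * E ?x / 2 - ?d * E T / 2" using ftc by (rule integral_unique)
    also have "\<dots> \<le> ?d * E ?x / 2" using Epos[of T] by (simp add: zero_le_dist)
    finally have *: "\<bar>I \<psi>1 ?x - I \<psi>2 ?x\<bar> \<le> ?d * E ?x / 2"
      unfolding I_def h1_def[symmetric] h2_def[symmetric] integral_diff[OF i1 i2] by simp
    have "dist (g \<psi>1 t) (g \<psi>2 t) = \<bar>I \<psi>1 ?x - I \<psi>2 ?x\<bar> / E ?x"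
      unfolding g_def dist_real_def using Epos[of ?x]
      by (simp add: diff_divide_distrib[symmetric] abs_divide)
    also have "\<dots> \<le> (1/2) * ?d" using * Epos[of ?x] by (simp add: divide_le_eq)
    finally show "dist (apply_bcontfun (\<Phi> \<psi>1) t) (apply_bcontfun (\<Phi> \<psi>2) t) \<le> (1/2) * ?d"
      by (simp add: \<Phi>app)
  qed
  obtain \<psi> where fixp: "\<Phi> \<psi> = \<psi>" using banach_fix_type[of "1/2" \<Phi>] contr by auto
  define u where "u t = E t * apply_bcontfun \<psi> t" for t
  have ueq: "u t = u0 + I \<psi> t" if "t \<ge> T" for t
  proof -
    have "apply_bcontfun \<psi> t = g \<psi> t" using fixp \<Phi>app by metis
    then show ?thesis using that Epos[of t] by (simp add: u_def g_def mx_def)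
  qed
  have "continuous_on {T..} u" unfolding u_def by (intro continuous_intros contE) simp
  moreover have "u T = u0" using ueq[of T] by (simp add: I_def)
  moreover have "(u has_real_derivative F t (u t)) (at t)" if t: "t > T" for t
  proof -
    have "((I \<psi>) has_real_derivative F t (E t * apply_bcontfun \<psi> t)) (at t within {T..t+1})"
      unfolding I_def
      by (rule integral_has_real_derivative, rule continuous_on_subset[OF hcont]) (use t in auto)
    then have "((I \<psi>) has_real_derivative F t (u t)) (at t)"
      using t by (simp add: at_within_Icc_at u_def)
    then have "((\<lambda>s. u0 + I \<psi> s) has_real_derivative F t (u t)) (at t)"
      by (auto intro!: derivative_eq_intros)
    then show ?thesis
      by (rule has_field_derivative_transform_within_open[of _ _ _ "{T<..}"]) (use t ueq in auto)
  qed
  ultimately show ?thesis by blast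
qed

lemma comparison:
  fixes h :: "real \<Rightarrow> real"
  assumes cont: "continuous_on {a..} h" and ha: "h a < 0"
    and der: "\<And>t. t > a \<Longrightarrow> h t = 0 \<Longrightarrow> \<exists>d. d < 0 \<and> (h has_real_derivative d) (at t)"
    and t: "t \<ge> a"
  shows "h t < 0"
proof (rule ccontr)
  assume "\<not> h t < 0"
  then have ht: "h t \<ge> 0" by simp
  define S where "S = {a..t} \<inter> h -` {0..}"
  have contS: "continuous_on {a..t} h" using cont by (rule continuous_on_subset) auto
  have cl: "closed S" unfolding S_def by (rule continuous_closed_preimage[OF contS]) auto
  have ne: "S \<noteq> {}" using ht t unfolding S_def by auto
  have bb: "bdd_below S" unfolding S_def by (rule bdd_belowI[of _ a]) auto
  define s where "s = Inf S"
  have sS: "s \<in> S" unfolding s_def by (rule closed_contains_Inf[OF ne bb cl])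
  have below: "h x < 0" if "a \<le> x" "x < s" for x
  proof (rule ccontr)
    assume "\<not> h x < 0"
    then have "x \<in> S" using that sS unfolding S_def by auto
    then have "s \<le> x" unfolding s_def by (rule cInf_lower[OF _ bb])
    then show False using that by simp
  qed
  have sa: "a \<le> s" "s \<le> t" "h s \<ge> 0" using sS unfolding S_def by auto
  have sgt: "s > a" using sa ha by (cases "s = a") auto
  have hs0: "h s = 0"
  proof (rule ccontr)
    assume "h s \<noteq> 0"
    then have "h s > 0" using sa by simp
    have "continuous_on {a..s} h" using cont by (rule continuous_on_subset) auto
    then obtain x where "a \<le> x" "x \<le> s" "h x = 0"
      using IVT'[of h a 0 s] ha \<open>h s > 0\<close> sgt by auto
    then show False using below[of x] \<open>h s > 0\<close> by (cases "x = s") auto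
  qed
  obtain d where d: "d < 0" "(h has_real_derivative d) (at s)" using der[OF sgt hs0] by blast
  obtain e where e: "e > 0" "\<forall>y>0. y < e \<longrightarrow> h s < h (s - y)"
    using DERIV_neg_dec_left[OF d(2) d(1)] by blast
  define y where "y = min (e/2) ((s - a)/2)"
  have "y > 0" "y < e" using e sgt by (auto simp: y_def)
  then have hlt: "h s < h (s - y)" using e by blast
  have "y \<le> (s - a)/2" unfolding y_def by (rule min.cobounded2)
  then have ay: "a \<le> s - y" using sgt by (simp add: field_simps)
  have "h (s - y) < 0" using below[of "s - y"] ay \<open>y > 0\<close> by simp
  then show False using hs0 hlt by simp
qed

lemma core:
  fixes \<Lambda> :: "nat \<Rightarrow> real \<Rightarrow> real" and w z Z C B lam \<mu> :: real and n p N m :: nat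
  assumes w: "0 < w" "w \<le> 1" and z: "0 < z" "z \<le> Z"
    and np: "n < 2*p" and m: "m = 2*p - n" and NN: "2*p \<le> N"
    and C: "C \<ge> 0" and B: "B \<ge> 0"
    and e1: "\<bar>\<Lambda> n (w^m*z) - (w^m*z)*lam\<bar> \<le> C*(w^m*z)^2"
    and e2: "\<bar>\<Lambda> (2*p) (w^m*z) - \<mu>\<bar> \<le> C*(w^m*z)"
    and e3: "\<And>k. k < 2*p \<Longrightarrow> \<bar>\<Lambda> k (w^m*z)\<bar> \<le> C*(w^m*z)"
    and e4: "\<And>k. k \<le> N \<Longrightarrow> \<bar>\<Lambda> k (w^m*z)\<bar> \<le> B"
  shows "\<bar>(\<Sum>k=n..N. w^k * \<Lambda> k (w^m*z)) - w^(2*p) * (lam*z + \<mu>)\<bar>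
           \<le> real (N+1) * (C*Z^2 + 2*C*Z + B) * w^(2*p+1)"
proof -
  define v where "v = w^m*z"
  have m1: "m \<ge> 1" and nm: "n + m = 2*p" using np m by auto
  have v0: "v > 0" using w z by (simp add: v_def)
  define err where "err k = w^k * \<Lambda> k v - (if k = n then w^(2*p)*lam*z else 0)
      - (if k = 2*p then w^(2*p)*\<mu> else 0)" for k
  define \<beta> where "\<beta> = (C*Z^2 + 2*C*Z + B) * w^(2*p+1)"
  have wle: "w^j \<le> w^i" if "i \<le> j" for i j using power_decreasing[OF that, of w] w by simp
  have wm: "w^m \<le> w" using wle[of 1 m] m1 by simp
  have wsplit: "w^(2*p) = w^n * w^m" using nm by (metis power_add)
  have Z0: "Z \<ge> 0" using z by simp
  have eb: "\<bar>err k\<bar> \<le> \<beta>" if k: "k \<in> {n..N}" for k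
  proof -
    consider "k = n" | "n < k" "k < 2*p" | "k = 2*p" | "2*p < k" using k np by force
    then show ?thesis
    proof cases
      case 1
      then have "err k = w^n * (\<Lambda> n v - v * lam)"
        using np unfolding err_def v_def wsplit by (simp add: algebra_simps)
      then have "\<bar>err k\<bar> = w^n * abs (\<Lambda> n v - v * lam)" using w by (simp add: abs_mult)
      also have "\<dots> \<le> w^n * (C* v^2)" using e1 w by (intro mult_left_mono) (auto simp: v_def)
      also have "\<dots> = C * z^2 * (w^(n+m) * w^m)" by (simp add: v_def power_mult_distrib power_add algebra_simps power2_eq_square)
      also have "\<dots> \<le> C * Z^2 * w^(2*p+1)"
      proof (rule mult_mono)
        show "C * z^2 \<le> C * Z^2" using z C by (intro mult_left_mono power_mono) auto
        show "w^(n+m) * w^m \<le> w^(2*p+1)" using wm w by (simp add: nm mult_left_mono)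
      qed (use C w in auto)
      also have "\<dots> \<le> \<beta>" unfolding \<beta>_def using B C Z0 w
        by (intro mult_right_mono) auto
      finally show ?thesis .
    next
      case 2
      then have "err k = w^k * \<Lambda> k v" by (simp add: err_def)
      then have "\<bar>err k\<bar> = w^k * abs (\<Lambda> k v)" using w by (simp add: abs_mult)
      also have "\<dots> \<le> w^k * (C* v)" using e3[of k] 2 w by (intro mult_left_mono) (auto simp: v_def)
      also have "\<dots> = C * z * (w^k * w^m)" by (simp add: v_def algebra_simps)
      also have "\<dots> \<le> C * Z * w^(2*p+1)"
      proof (rule mult_mono)
        show "C * z \<le> C * Z" using z C by (intro mult_left_mono) auto
        show "w^k * w^m \<le> w^(2*p+1)" unfolding power_add[symmetric] using 2 nm by (intro wle) auto
      qed (use C w Z0 in auto)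
      also have "\<dots> \<le> \<beta>" unfolding \<beta>_def using B C Z0 w
        by (intro mult_right_mono) auto
      finally show ?thesis .
    next
      case 3
      then have "err k = w^(2*p) * (\<Lambda> (2*p) v - \<mu>)" using np by (simp add: err_def algebra_simps)
      then have "\<bar>err k\<bar> = w^(2*p) * abs (\<Lambda> (2*p) v - \<mu>)" using w by (simp add: abs_mult)
      also have "\<dots> \<le> w^(2*p) * (C* v)" using e2 w by (intro mult_left_mono) (auto simp: v_def)
      also have "\<dots> = C * z * (w^(2*p) * w^m)" by (simp add: v_def algebra_simps)
      also have "\<dots> \<le> C * Z * w^(2*p+1)"
      proof (rule mult_mono)
        show "C * z \<le> C * Z" using z C by (intro mult_left_mono) auto
        show "w^(2*p) * w^m \<le> w^(2*p+1)" unfolding power_add[symmetric] using m1 by (intro wle) auto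
      qed (use C w Z0 in auto)
      also have "\<dots> \<le> \<beta>" unfolding \<beta>_def using B C Z0 w
        by (intro mult_right_mono) auto
      finally show ?thesis .
    next
      case 4
      then have "err k = w^k * \<Lambda> k v" using np by (simp add: err_def)
      then have "\<bar>err k\<bar> = w^k * abs (\<Lambda> k v)" using w by (simp add: abs_mult)
      also have "\<dots> \<le> w^(2*p+1) * B"
        using e4[of k] k 4 w wle[of "2*p+1" k] by (intro mult_mono) (auto simp: v_def)
      also have "\<dots> \<le> \<beta>" unfolding \<beta>_def using B C Z0 w
        by (simp add: mult.commute mult_right_mono)
      finally show ?thesis .
    qed
  qed
  have sumeq: "(\<Sum>k=n..N. err k) = (\<Sum>k=n..N. w^k * \<Lambda> k v) - w^(2*p) * (lam*z + \<mu>)"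
  proof -
    have s1: "(\<Sum>k=n..N. (if k = n then w^(2*p)*lam*z else 0)) = w^(2*p)*lam*z"
      using np NN by (subst sum.delta) auto
    have s2: "(\<Sum>k=n..N. (if k = 2*p then w^(2*p)*\<mu> else 0)) = w^(2*p)*\<mu>"
      using np NN by (subst sum.delta) auto
    show ?thesis unfolding err_def sum_subtractf s1 s2 by (simp add: algebra_simps)
  qed
  have "\<bar>\<Sum>k=n..N. err k\<bar> \<le> (\<Sum>k=n..N. \<bar>err k\<bar>)" by (rule sum_abs)
  also have "\<dots> \<le> (\<Sum>k=n..N. \<beta>)" by (rule sum_mono) (use eb in auto)
  also have "\<dots> = real (N + 1 - n) * \<beta>" by simp
  also have "\<dots> \<le> real (N+1) * \<beta>"
    using B C Z0 w unfolding \<beta>_def by (intro mult_right_mono) auto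
  finally show ?thesis unfolding sumeq v_def \<beta>_def by (simp add: mult.assoc)
qed

lemma lip_deriv:
  fixes f f' :: "real \<Rightarrow> real"
  assumes der: "\<And>v. v \<in> {a..b} \<Longrightarrow> (f has_real_derivative f' v) (at v)"
    and bd: "\<And>v. v \<in> {a..b} \<Longrightarrow> \<bar>f' v\<bar> \<le> D"
    and x: "x \<in> {a..b}" and y: "y \<in> {a..b}"
  shows "\<bar>f x - f y\<bar> \<le> D * \<bar>x - y\<bar>"
proof -
  have *: "\<bar>f y - f x\<bar> \<le> D*(y - x)" if xy: "x < y" "x \<in> {a..b}" "y \<in> {a..b}" for x y
  proof -
    obtain z where z: "x < z" "z < y" "f y - f x = (y - x) * f' z"
      using MVT2[of x y f f'] der xy by force
    then have "\<bar>f y - f x\<bar> = (y - x) * \<bar>f' z\<bar>" using xy by (simp add: abs_mult)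
    also have "\<dots> \<le> (y - x) * D" using bd[of z] xy z by (intro mult_left_mono) auto
    finally show ?thesis by (simp add: mult.commute)
  qed
  consider "x < y" | "x = y" | "y < x" by linarith
  then show ?thesis using *[of x y] *[of y x] x y by cases (auto simp: abs_minus_commute)
qed

lemma ev_small:
  fixes K e :: real and q :: nat
  assumes "q \<ge> 1" "e > 0"
  shows "eventually (\<lambda>t. K * t powr (-1/real q) < e) at_top"
proof -
  have "((\<lambda>t. t powr (-1/real q)) \<longlongrightarrow> 0) at_top"
    by (rule tendsto_neg_powr) (use assms in \<open>auto simp: filterlim_ident\<close>)
  then have "((\<lambda>t. K * t powr (-1/real q)) \<longlongrightarrow> K * 0) at_top"
    by (intro tendsto_mult tendsto_const)
  then show ?thesis using assms by (auto dest: order_tendstoD(2))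
qed

theorem lemma1:
  fixes \<Lambda> :: "nat \<Rightarrow> real \<Rightarrow> real"
    and \<Lambda>' :: "nat \<Rightarrow> real \<Rightarrow> real"
    and n p q N :: nat
    and \<mu> lam r0 :: real
  assumes q_pos: "q \<ge> 1" and p_pos: "p \<ge> 1" and n_pos: "n \<ge> 1"
    and r0_pos: "r0 > 0"
    and smooth: "\<And>k v. v \<in> {-r0<..<r0} \<Longrightarrow> (\<Lambda> k has_real_derivative \<Lambda>' k v) (at v)"
    and smooth_cont: "\<And>k. continuous_on {-r0<..<r0} (\<Lambda>' k)"
    and below_n: "\<And>k v. k < n \<Longrightarrow> v \<in> {-r0<..<r0} \<Longrightarrow> \<Lambda> k v = 0"
    and mu_pos: "\<mu> > 0"
    and Lambda_2p: "(\<lambda>E. \<Lambda> (2*p) E - \<mu>) \<in> O[at 0](\<lambda>E. E)"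
    and Sigma1: "n < 2*p" "n \<le> q"
    and Lambda_n: "(\<lambda>v. \<Lambda> n v - v * lam) \<in> O[at 0](\<lambda>v. v^2)"
    and lam_nz: "lam \<noteq> 0"
    and Lambda_k: "\<And>k. k < 2*p \<Longrightarrow> \<Lambda> k \<in> O[at 0](\<lambda>v. v)"
    and N_range: "2*p \<le> N" "N \<le> 4*p"
    and neg: "lam + kdelta n q * ((real (2*p) - real n) / real q) < 0"
  shows
    "let theta0 = (real (2*p) - real n) / real q;
         kappa0 = min (1 / real q) theta0;
         xi0 = \<mu> / \<bar>lam + kdelta n q * theta0\<bar>;
         varkappa0 = min kappa0 \<bar>lam + theta0\<bar>
     in \<exists>u :: real \<Rightarrow> real. \<exists>T. T > 0 \<and>
          (\<forall>t > T. (u has_real_derivative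
              (\<Sum>k = n..N. t powr (- real k / real q) * \<Lambda> k (u t))) (at t)) \<and>
          (n < q \<longrightarrow>
              (\<lambda>t. t powr theta0 * u t - xi0) \<in> O[at_top](\<lambda>_. 1)) \<and>
          (n = q \<longrightarrow> (\<forall>\<epsilon>. 0 < \<epsilon> \<and> \<epsilon> < 1 \<longrightarrow>
              (\<lambda>t. t powr theta0 * u t - xi0) \<in>
                 O[at_top](\<lambda>t. t powr (- (1 - \<epsilon>) * varkappa0))))"
proof -
  define \<theta> where "\<theta> = (real (2*p) - real n) / real q"
  define a where "a = lam + kdelta n q * \<theta>"
  define \<xi> where "\<xi> = \<mu> / \<bar>lam + kdelta n q * \<theta>\<bar>"
  define m where "m = 2*p - n"
  define r where "r = r0 / 2"
  have q0: "real q > 0" using q_pos by simp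
  have m1: "m \<ge> 1" using Sigma1 by (simp add: m_def)
  have \<theta>m: "\<theta> = real m / real q" using Sigma1 by (simp add: \<theta>_def m_def of_nat_diff)
  have \<theta>pos: "\<theta> > 0" using m1 q0 by (simp add: \<theta>m)
  have \<theta>ge: "\<theta> \<ge> 1 / real q" using m1 q0 by (simp add: \<theta>m divide_right_mono)
  have aneg: "a < 0" using neg by (simp add: a_def \<theta>_def)
  have \<xi>a: "\<xi> = \<mu> / \<bar>a\<bar>" by (simp add: \<xi>_def a_def)
  have \<xi>pos: "\<xi> > 0" using mu_pos aneg by (simp add: \<xi>a divide_pos_neg)
  have a\<xi>: "a * \<xi> + \<mu> = 0" using aneg by (simp add: \<xi>a)
  have r0: "r > 0" "r < r0" using r0_pos by (auto simp: r_def)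
  have subr: "{-r..r} \<subseteq> {-r0<..<r0}" using r0 by auto
  have contL: "continuous_on {-r..r} (\<Lambda> k)" for k
    by (rule continuous_at_imp_continuous_on) (use smooth subr in \<open>blast intro: DERIV_isCont\<close>)
  have contL': "continuous_on {-r..r} (\<Lambda>' k)" for k
    by (rule continuous_on_subset[OF smooth_cont subr])
  have "compact (\<Union>k\<in>{..N}. \<Lambda> k ` {-r..r})"
    by (intro compact_UN finite_atMost compact_continuous_image contL compact_Icc)
  then obtain B where B: "B > 0" "\<forall>x\<in>(\<Union>k\<in>{..N}. \<Lambda> k ` {-r..r}). norm x \<le> B"
    using compact_imp_bounded bounded_pos by metis
  have Bb: "\<bar>\<Lambda> k v\<bar> \<le> B" if "k \<le> N" "v \<in> {-r..r}" for k v using B(2) that by auto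
  have "compact (\<Union>k\<in>{..N}. \<Lambda>' k ` {-r..r})"
    by (intro compact_UN finite_atMost compact_continuous_image contL' compact_Icc)
  then obtain D where D: "D > 0" "\<forall>x\<in>(\<Union>k\<in>{..N}. \<Lambda>' k ` {-r..r}). norm x \<le> D"
    using compact_imp_bounded bounded_pos by metis
  have Llip: "\<bar>\<Lambda> k x - \<Lambda> k y\<bar> \<le> D * \<bar>x - y\<bar>" if "k \<le> N" "x \<in> {-r..r}" "y \<in> {-r..r}" for k x y
    by (rule lip_deriv[of "-r" r "\<Lambda> k" "\<Lambda>' k"]) (use smooth subr D(2) that in auto)
  obtain c1 where c1: "c1 > 0" "eventually (\<lambda>v. norm (\<Lambda> n v - v * lam) \<le> c1 * norm (v^2)) (at 0)"
    using Lambda_n by (rule landau_o.bigE)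
  obtain c2 where c2: "c2 > 0" "eventually (\<lambda>v. norm (\<Lambda> (2*p) v - \<mu>) \<le> c2 * norm v) (at 0)"
    using Lambda_2p by (rule landau_o.bigE)
  have "\<forall>k\<in>{..<2*p}. \<exists>c. c > 0 \<and> eventually (\<lambda>v. norm (\<Lambda> k v) \<le> c * norm v) (at 0)"
  proof
    fix k assume "k \<in> {..<2*p}"
    then have "\<Lambda> k \<in> O[at 0](\<lambda>v. v)" using Lambda_k by simp
    then obtain c where "c > 0" "eventually (\<lambda>v. norm (\<Lambda> k v) \<le> c * norm v) (at 0)"
      by (rule landau_o.bigE)
    then show "\<exists>c. c > 0 \<and> eventually (\<lambda>v. norm (\<Lambda> k v) \<le> c * norm v) (at 0)" by blast
  qed
  then obtain ck where ck: "\<forall>k\<in>{..<2*p}. ck k > 0 \<and> eventually (\<lambda>v. norm (\<Lambda> k v) \<le> ck k * norm v) (at 0)"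
    by (metis (no_types) bchoice)
  have ev3: "eventually (\<lambda>v. \<forall>k\<in>{..<2*p}. norm (\<Lambda> k v) \<le> ck k * norm v) (at 0)"
    by (rule eventually_ball_finite) (use ck in auto)
  define C where "C = c1 + c2 + (\<Sum>k<2*p. ck k)"
  have ckC: "ck k \<le> C" if "k < 2*p" for k
  proof -
    have "ck k \<le> (\<Sum>k<2*p. ck k)" by (rule member_le_sum) (use ck that in \<open>auto intro: less_imp_le\<close>)
    then show ?thesis using c1 c2 by (simp add: C_def)
  qed
  have sck0: "(\<Sum>k<2*p. ck k) \<ge> 0" by (rule sum_nonneg) (use ck in \<open>auto intro: less_imp_le\<close>)
  have Cpos: "C > 0" and c1C: "c1 \<le> C" and c2C: "c2 \<le> C" using c1 c2 sck0 by (auto simp: C_def)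
  have "eventually (\<lambda>v. norm (\<Lambda> n v - v * lam) \<le> c1 * norm (v^2) \<and> norm (\<Lambda> (2*p) v - \<mu>) \<le> c2 * norm v
      \<and> (\<forall>k\<in>{..<2*p}. norm (\<Lambda> k v) \<le> ck k * norm v)) (at 0)"
    using c1(2) c2(2) ev3 by eventually_elim auto
  then obtain \<delta>0 where \<delta>0: "\<delta>0 > 0" and \<delta>0P: "\<And>v. v \<noteq> 0 \<Longrightarrow> dist v 0 < \<delta>0 \<Longrightarrow>
      norm (\<Lambda> n v - v * lam) \<le> c1 * norm (v^2) \<and> norm (\<Lambda> (2*p) v - \<mu>) \<le> c2 * norm v
      \<and> (\<forall>k\<in>{..<2*p}. norm (\<Lambda> k v) \<le> ck k * norm v)"
    unfolding eventually_at by auto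
  have e1: "\<bar>\<Lambda> n v - v * lam\<bar> \<le> C * v^2" and e2: "\<bar>\<Lambda> (2*p) v - \<mu>\<bar> \<le> C * v"
    and e3: "\<And>k. k < 2*p \<Longrightarrow> \<bar>\<Lambda> k v\<bar> \<le> C * v"
    if v: "0 < v" "v < \<delta>0" for v
  proof -
    have P: "norm (\<Lambda> n v - v * lam) \<le> c1 * norm (v^2) \<and> norm (\<Lambda> (2*p) v - \<mu>) \<le> c2 * norm v
      \<and> (\<forall>k\<in>{..<2*p}. norm (\<Lambda> k v) \<le> ck k * norm v)" using \<delta>0P[of v] v by auto
    have "c1 * v^2 \<le> C * v^2" using c1C by (intro mult_right_mono) auto
    then show "\<bar>\<Lambda> n v - v * lam\<bar> \<le> C * v^2" using P by simp
    have h2: "c2 * v \<le> C * v" using c2C v by (intro mult_right_mono) auto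
    have "\<bar>\<Lambda> (2*p) v - \<mu>\<bar> \<le> c2 * v" using P v by simp
    then show "\<bar>\<Lambda> (2*p) v - \<mu>\<bar> \<le> C * v" using h2 by (rule order_trans)
    fix k assume k: "k < 2*p"
    have h3: "ck k * v \<le> C * v" using ckC[OF k] v by (intro mult_right_mono) auto
    have "\<bar>\<Lambda> k v\<bar> \<le> ck k * v" using P v k by force
    then show "\<bar>\<Lambda> k v\<bar> \<le> C * v" using h3 by (rule order_trans)
  qed

  define Z where "Z = 3 * \<xi> / 2"
  have Zpos: "Z > 0" using \<xi>pos by (simp add: Z_def)
  define K1 where "K1 = real (N+1) * (C*Z^2 + 2*C*Z + B)"
  define K2 where "K2 = K1 + \<theta> * Z"
  have K1pos: "K1 > 0" unfolding K1_def using Cpos Zpos B by (intro mult_pos_pos add_nonneg_pos) auto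
  have K2pos: "K2 > 0" unfolding K2_def using K1pos \<theta>pos Zpos by (simp add: add_pos_pos)
  define wf where "wf t = t powr (-1/real q)" for t :: real
  define E where "E t z = \<theta> * t powr (\<theta> - 1) * (t powr (-\<theta>) * z) + t powr \<theta> *
      (\<Sum>k=n..N. t powr (- real k / real q) * \<Lambda> k (t powr (-\<theta>) * z))" for t z
  have wpos: "wf t > 0" if "t > 0" for t using that by (simp add: wf_def)
  have winv: "wf t = inverse (t powr (1/real q))" for t
    by (simp add: wf_def powr_minus[symmetric])
  have wle1: "wf t \<le> 1" if "t \<ge> 1" for t
  proof -
    have "1 \<le> t powr (1/real q)" using that by (intro ge_one_powr_ge_zero) auto
    then show ?thesis unfolding winv by (simp add: inverse_le_1_iff)
  qed
  have pw: "(wf t)^j = t powr (- real j / real q)" if "t > 0" for t j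
    using that by (simp add: wf_def powr_power)
  have KE: "\<bar>E t z - (wf t)^n * (a*z + \<mu>)\<bar> \<le> K2 * (wf t)^(n+1)"
    if t: "t \<ge> 1" and w\<delta>: "wf t * Z < \<delta>0" and wr: "wf t * Z \<le> r" and z: "0 < z" "z \<le> Z" for t z
  proof -
    obtain w where w_def: "w = wf t" by simp
    have t0: "t > 0" using t by simp
    have w0: "w > 0" "w \<le> 1" using wpos[OF t0] wle1[OF t] by (auto simp: w_def)
    have pw': "t powr (- real j / real q) = w^j" for j using pw[OF t0, of j] by (simp add: w_def)
    have pw'': "t powr (- (real j / real q)) = w^j" for j using pw'[of j] by simp
    have wm: "w^m \<le> w" using power_decreasing[of 1 m w] m1 w0 by simp
    define v where "v = w^m * z"
    have v0: "v > 0" using w0 z by (simp add: v_def)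
    have vle: "v \<le> w * Z" unfolding v_def using wm z w0 by (intro mult_mono) auto
    have v\<delta>: "v < \<delta>0" using vle w\<delta> by (simp add: w_def)
    have vr: "v \<in> {-r..r}" using vle wr v0 by (auto simp: w_def)
    have tmth: "t powr (-\<theta>) = w^m" using pw'[of m] by (simp add: \<theta>m)
    have "inverse (t powr \<theta>) = w^m" using tmth by (simp add: powr_minus)
    then have tth: "t powr \<theta> = inverse (w^m)" by (metis inverse_inverse_eq)
    have tlin: "t powr (\<theta> - 1) * t powr (-\<theta>) = w^q"
    proof -
      have "t powr (\<theta> - 1) * t powr (-\<theta>) = t powr (-1)" by (simp add: powr_add[symmetric])
      also have "\<dots> = w^q" using pw'[of q] q0 by simp
      finally show ?thesis .
    qed
    have lin: "\<theta> * t powr (\<theta> - 1) * (t powr (-\<theta>) * z) = \<theta> * z * w^q"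
    proof -
      have "\<theta> * t powr (\<theta> - 1) * (t powr (-\<theta>) * z) = \<theta> * z * (t powr (\<theta> - 1) * t powr (-\<theta>))"
        by (simp add: mult_ac)
      then show ?thesis using tlin by simp
    qed
    define S where "S = (\<Sum>k=n..N. w^k * \<Lambda> k v)"
    have sumeq: "(\<Sum>k=n..N. t powr (- real k / real q) * \<Lambda> k (t powr (-\<theta>) * z)) = S"
      unfolding S_def by (rule sum.cong) (auto simp: pw' pw'' tmth v_def)
    have Eeq: "E t z = \<theta> * z * w^q + inverse (w^m) * S"
      unfolding E_def lin sumeq tth ..
    have cr: "\<bar>S - w^(2*p) * (lam*z + \<mu>)\<bar> \<le> K1 * w^(2*p+1)"
      unfolding S_def v_def K1_def
      by (rule core[where \<Lambda>=\<Lambda> and C=C and B=B and Z=Z, OF w0 z Sigma1(1) m_def N_range(1)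
          less_imp_le[OF Cpos] less_imp_le[OF B(1)]])
        (use e1[OF v0 v\<delta>] e2[OF v0 v\<delta>] e3[OF v0 v\<delta>] Bb vr in \<open>auto simp: v_def\<close>)
    have wsplit: "w^(2*p) = w^n * w^m" using Sigma1 by (simp add: m_def power_add[symmetric])
    have wsplit2: "w^(2*p+1) = w^(n+1) * w^m" using Sigma1 by (simp add: m_def power_add[symmetric])
    have wmpos: "w^m > 0" using w0 by simp
    have part1: "\<bar>inverse (w^m) * S - w^n * (lam*z + \<mu>)\<bar> \<le> K1 * w^(n+1)"
    proof -
      have "inverse (w^m) * S - w^n * (lam*z + \<mu>) = inverse (w^m) * (S - w^(2*p) * (lam*z + \<mu>))"
        unfolding wsplit using w0 by (simp add: field_simps)
      then have "\<bar>inverse (w^m) * S - w^n * (lam*z + \<mu>)\<bar> = inverse (w^m) * \<bar>S - w^(2*p) * (lam*z + \<mu>)\<bar>"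
        using wmpos by (simp add: abs_mult)
      also have "\<dots> \<le> inverse (w^m) * (K1 * w^(2*p+1))"
        using cr wmpos by (intro mult_left_mono) auto
      also have "\<dots> = K1 * w^(n+1)" unfolding wsplit2 using w0 by (simp add: field_simps)
      finally show ?thesis .
    qed
    have part2: "\<bar>\<theta> * z * w^q - kdelta n q * \<theta> * z * w^n\<bar> \<le> \<theta> * Z * w^(n+1)"
    proof (cases "n = q")
      case True
      then show ?thesis using \<theta>pos Zpos w0 by (simp add: kdelta_def)
    next
      case False
      then have nq: "n + 1 \<le> q" using Sigma1 by simp
      have "w^q \<le> w^(n+1)" using power_decreasing[OF nq, of w] w0 by simp
      then have "\<theta> * z * w^q \<le> \<theta> * Z * w^(n+1)"
        using \<theta>pos z w0 by (intro mult_mono) auto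
      then show ?thesis using False \<theta>pos z w0 by (simp add: kdelta_def)
    qed
    have "E t z - w^n * (a*z + \<mu>) = (inverse (w^m) * S - w^n * (lam*z + \<mu>))
        + (\<theta> * z * w^q - kdelta n q * \<theta> * z * w^n)"
      unfolding Eeq a_def by (simp add: algebra_simps)
    then have "\<bar>E t z - w^n * (a*z + \<mu>)\<bar> \<le> K1 * w^(n+1) + \<theta> * Z * w^(n+1)"
      using part1 part2 by linarith
    then show ?thesis by (simp add: K2_def w_def algebra_simps)
  qed

  define cl where "cl x = max (-r) (min r x)" for x
  have clr: "cl x \<in> {-r..r}" for x using r0 by (auto simp: cl_def)
  have cllip: "\<bar>cl x - cl y\<bar> \<le> \<bar>x - y\<bar>" for x y by (auto simp: cl_def)
  have clid: "cl x = x" if "x \<in> {-r..r}" for x using that by (auto simp: cl_def)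
  define F where "F t x = (\<Sum>k=n..N. t powr (- real k / real q) * \<Lambda> k (cl x))" for t x
  have evA: "eventually (\<lambda>t. Z * t powr (-1/real q) < \<delta>0) at_top"
    by (rule ev_small) (use q_pos \<delta>0 in auto)
  have evB: "eventually (\<lambda>t. Z * t powr (-1/real q) < r) at_top"
    by (rule ev_small) (use q_pos r0 in auto)
  have evC: "eventually (\<lambda>t. K2 * t powr (-1/real q) < \<bar>a\<bar> * \<xi> / 2) at_top"
    by (rule ev_small) (use q_pos aneg \<xi>pos in \<open>auto simp: mult_neg_pos\<close>)
  obtain T0 where T0: "\<And>t. t \<ge> T0 \<Longrightarrow> Z * wf t < \<delta>0 \<and> Z * wf t < r \<and> K2 * wf t < \<bar>a\<bar> * \<xi> / 2"
    using eventually_conj[OF evA eventually_conj[OF evB evC]]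
    unfolding eventually_at_top_linorder wf_def by blast
  define T where "T = max T0 1"
  have T1: "T \<ge> 1" and TT0: "T \<ge> T0" by (auto simp: T_def)
  have good: "wf t * Z < \<delta>0" "wf t * Z < r" "K2 * wf t < \<bar>a\<bar> * \<xi> / 2" if "t \<ge> T" for t
    using T0[of t] that TT0 by (auto simp: mult.commute)
  have tp: "0 \<le> t powr (- real k / real q) \<and> t powr (- real k / real q) \<le> 1" if "t \<ge> 1" for t k
  proof -
    have "0 < wf t" "wf t \<le> 1" using wpos[of t] wle1[OF that] that by auto
    then have "0 \<le> (wf t)^k \<and> (wf t)^k \<le> 1" by (simp add: power_le_one)
    then show ?thesis using pw[of t k] that by simp
  qed
  obtain u where u: "continuous_on {T..} u" "u T = T powr (-\<theta>) * \<xi>"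
      "\<And>t. t > T \<Longrightarrow> (u has_real_derivative F t (u t)) (at t)"
  proof -
    have "\<exists>u. continuous_on {T..} u \<and> u T = T powr (-\<theta>) * \<xi> \<and> (\<forall>t>T. (u has_real_derivative F t (u t)) (at t))"
    proof (rule ode_exists[where K = "real (N+1) * B" and L = "real (N+1) * D + 1"])
      fix w :: "real \<Rightarrow> real" assume w: "continuous_on {T..} w"
      show "continuous_on {T..} (\<lambda>s. F s (w s))"
        unfolding F_def
      proof (intro continuous_on_sum continuous_on_mult)
        fix k
        show "continuous_on {T..} (\<lambda>s. s powr (- real k / real q))"
          using T1 by (intro continuous_intros) auto
        have "continuous_on {T..} (\<lambda>s. cl (w s))" unfolding cl_def by (intro continuous_intros w)
        then show "continuous_on {T..} (\<lambda>s. \<Lambda> k (cl (w s)))"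
          by (rule continuous_on_compose2[OF contL[of k]]) (use clr in auto)
      qed
    next
      fix t x assume t: "t \<ge> T"
      have "\<bar>F t x\<bar> \<le> (\<Sum>k=n..N. \<bar>t powr (- real k / real q) * \<Lambda> k (cl x)\<bar>)"
        unfolding F_def by (rule sum_abs)
      also have "\<dots> \<le> (\<Sum>k=n..N. B)"
      proof (rule sum_mono)
        fix k assume k: "k \<in> {n..N}"
        have "\<bar>t powr (- real k / real q) * \<Lambda> k (cl x)\<bar> = t powr (- real k / real q) * \<bar>\<Lambda> k (cl x)\<bar>"
          using tp[of t k] t T1 by (simp add: abs_mult)
        also have "\<dots> \<le> 1 * B" using tp[of t k] t T1 Bb[of k "cl x"] k clr
          by (intro mult_mono) auto
        finally show "\<bar>t powr (- real k / real q) * \<Lambda> k (cl x)\<bar> \<le> B" by simp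
      qed
      also have "\<dots> \<le> real (N+1) * B" using B by (simp add: mult_right_mono)
      finally show "\<bar>F t x\<bar> \<le> real (N+1) * B" .
    next
      fix t x y assume t: "t \<ge> T"
      have "\<bar>F t x - F t y\<bar> = \<bar>\<Sum>k=n..N. t powr (- real k / real q) * (\<Lambda> k (cl x) - \<Lambda> k (cl y))\<bar>"
        unfolding F_def sum_subtractf[symmetric] by (simp add: right_diff_distrib)
      also have "\<dots> \<le> (\<Sum>k=n..N. \<bar>t powr (- real k / real q) * (\<Lambda> k (cl x) - \<Lambda> k (cl y))\<bar>)"
        by (rule sum_abs)
      also have "\<dots> \<le> (\<Sum>k=n..N. D * \<bar>x - y\<bar>)"
      proof (rule sum_mono)
        fix k assume k: "k \<in> {n..N}"
        have "\<bar>t powr (- real k / real q) * (\<Lambda> k (cl x) - \<Lambda> k (cl y))\<bar>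
            = t powr (- real k / real q) * \<bar>\<Lambda> k (cl x) - \<Lambda> k (cl y)\<bar>"
          using tp[of t k] t T1 by (simp add: abs_mult)
        also have "\<dots> \<le> 1 * (D * \<bar>cl x - cl y\<bar>)" using tp[of t k] t T1 Llip[of k "cl x" "cl y"] k clr
          by (intro mult_mono) auto
        also have "\<dots> \<le> D * \<bar>x - y\<bar>" using cllip[of x y] D by (simp add: mult_left_mono)
        finally show "\<bar>t powr (- real k / real q) * (\<Lambda> k (cl x) - \<Lambda> k (cl y))\<bar> \<le> D * \<bar>x - y\<bar>" .
      qed
      also have "\<dots> = real (N + 1 - n) * D * \<bar>x - y\<bar>" by simp
      also have "\<dots> \<le> (real (N+1) * D + 1) * \<bar>x - y\<bar>"
      proof (rule mult_right_mono)
        have "real (N + 1 - n) * D \<le> real (N+1) * D" using D by (intro mult_right_mono) auto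
        then show "real (N + 1 - n) * D \<le> real (N+1) * D + 1" by linarith
      qed simp
      finally show "\<bar>F t x - F t y\<bar> \<le> (real (N+1) * D + 1) * \<bar>x - y\<bar>" .
    next
      show "real (N+1) * D + 1 > 0" using D by (simp add: add_nonneg_pos)
    qed
    then show ?thesis using that by blast
  qed

  define \<zeta> where "\<zeta> t = t powr \<theta> * u t" for t
  have \<zeta>T: "\<zeta> T = \<xi>"
  proof -
    have "T powr \<theta> * T powr (-\<theta>) = 1" using T1 by (simp add: powr_minus)
    then show ?thesis unfolding \<zeta>_def u(2) by (metis mult.assoc mult_1)
  qed
  have \<zeta>cont: "continuous_on {T..} \<zeta>" unfolding \<zeta>_def using T1
    by (intro continuous_intros u(1)) auto
  have \<zeta>der: "(\<zeta> has_real_derivative \<theta> * t powr (\<theta>-1) * u t + t powr \<theta> * F t (u t)) (at t)"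
    if t: "t > T" for t
  proof -
    have "((\<lambda>s. s powr \<theta> * u s) has_real_derivative (\<theta> * t powr (\<theta>-1)) * u t + F t (u t) * t powr \<theta>) (at t)"
      by (rule DERIV_mult[OF has_real_derivative_powr u(3)[OF t]]) (use t T1 in auto)
    then show ?thesis by (simp add: \<zeta>_def[abs_def] mult.commute)
  qed
  have smallu: "t powr (-\<theta>) * z \<in> {-r..r}" and smallu2: "t powr (-\<theta>) * z \<le> wf t * Z"
    if t: "t \<ge> T" and z: "0 < z" "z \<le> Z" for t z
  proof -
    have t0: "t > 0" using t T1 by simp
    have w0: "0 < wf t" "wf t \<le> 1" using wpos[OF t0] wle1 t T1 by auto
    have "t powr (-\<theta>) = (wf t)^m" using pw[OF t0, of m] by (simp add: \<theta>m)
    moreover have "(wf t)^m \<le> wf t" using power_decreasing[of 1 m "wf t"] m1 w0 by simp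
    ultimately show le: "t powr (-\<theta>) * z \<le> wf t * Z" using z w0 by (auto intro!: mult_mono)
    moreover have "t powr (-\<theta>) * z \<ge> 0" using z t0 by simp
    ultimately show "t powr (-\<theta>) * z \<in> {-r..r}" using good(2)[OF t] r0 by auto
  qed
  have ueq: "u t = t powr (-\<theta>) * \<zeta> t" if "t \<ge> T" for t
    using that T1 by (simp add: \<zeta>_def powr_minus)
  have \<zeta>E: "(\<zeta> has_real_derivative E t z) (at t)" if t: "t > T" and z: "\<zeta> t = z" "0 < z" "z \<le> Z" for t z
  proof -
    have ut: "u t = t powr (-\<theta>) * z" using ueq[of t] t z by simp
    have "F t (u t) = (\<Sum>k=n..N. t powr (- real k / real q) * \<Lambda> k (t powr (-\<theta>) * z))"
    proof -
      have "cl (t powr (-\<theta>) * z) = t powr (-\<theta>) * z" using clid smallu[of t z] t z by auto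
      then show ?thesis by (simp add: F_def ut)
    qed
    then show ?thesis using \<zeta>der[OF t] by (simp add: E_def ut)
  qed
  have KEt: "E t z \<le> (wf t)^n * (a*z + \<mu> + K2 * wf t) \<and> E t z \<ge> (wf t)^n * (a*z + \<mu> - K2 * wf t)"
    if t: "t \<ge> T" and z: "0 < z" "z \<le> Z" for t z
  proof -
    have "\<bar>E t z - (wf t)^n * (a*z + \<mu>)\<bar> \<le> K2 * (wf t)^(n+1)"
      using KE[of t z] good[OF t] t T1 z by auto
    then show ?thesis by (simp add: algebra_simps abs_le_iff)
  qed
  have aZ: "a * Z + \<mu> = - (\<bar>a\<bar> * \<xi> / 2)" using a\<xi> aneg by (simp add: Z_def algebra_simps)
  have a\<xi>2: "a * (\<xi>/2) + \<mu> = \<bar>a\<bar> * \<xi> / 2" using a\<xi> aneg by (simp add: algebra_simps)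
  have upper: "\<zeta> t - Z < 0" if t: "t \<ge> T" for t
  proof (rule comparison[OF _ _ _ t])
    show "continuous_on {T..} (\<lambda>s. \<zeta> s - Z)" by (intro continuous_intros \<zeta>cont)
    show "\<zeta> T - Z < 0" using \<xi>pos by (simp add: \<zeta>T Z_def)
  next
    fix s assume s: "s > T" "\<zeta> s - Z = 0"
    have d: "(\<zeta> has_real_derivative E s Z) (at s)" using \<zeta>E[of s Z] s Zpos by simp
    have w0: "wf s > 0" using wpos[of s] s T1 by simp
    have "E s Z \<le> (wf s)^n * (a*Z + \<mu> + K2 * wf s)" using KEt[of s Z] s Zpos by simp
    also have "\<dots> < 0" using good(3)[of s] s w0 by (intro mult_pos_neg) (auto simp: aZ)
    finally show "\<exists>d<0. ((\<lambda>s. \<zeta> s - Z) has_real_derivative d) (at s)"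
      using DERIV_diff[OF d DERIV_const[of Z "at s"]] by auto
  qed
  have lower: "\<xi>/2 - \<zeta> t < 0" if t: "t \<ge> T" for t
  proof (rule comparison[OF _ _ _ t])
    show "continuous_on {T..} (\<lambda>s. \<xi>/2 - \<zeta> s)" by (intro continuous_intros \<zeta>cont)
    show "\<xi>/2 - \<zeta> T < 0" using \<xi>pos by (simp add: \<zeta>T)
  next
    fix s assume s: "s > T" "\<xi>/2 - \<zeta> s = 0"
    have d: "(\<zeta> has_real_derivative E s (\<xi>/2)) (at s)" using \<zeta>E[of s "\<xi>/2"] s \<xi>pos by (simp add: Z_def)
    have w0: "wf s > 0" using wpos[of s] s T1 by simp
    have "K2 * wf s < a*(\<xi>/2) + \<mu>" using good(3)[of s] s(1) a\<xi>2 by linarith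
    then have "0 < (wf s)^n * (a*(\<xi>/2) + \<mu> - K2 * wf s)" using w0
      by (intro mult_pos_pos) auto
    also have "\<dots> \<le> E s (\<xi>/2)" using KEt[of s "\<xi>/2"] s(1) \<xi>pos by (simp add: Z_def)
    finally show "\<exists>d<0. ((\<lambda>s. \<xi>/2 - \<zeta> s) has_real_derivative d) (at s)"
      using DERIV_diff[OF DERIV_const[of "\<xi>/2" "at s"] d] by (intro exI[of _ "- E s (\<xi>/2)"]) auto
  qed
  have \<zeta>bnd: "\<bar>\<zeta> t - \<xi>\<bar> < \<xi>/2" if "t \<ge> T" for t
  proof -
    have "\<zeta> t < Z" "\<xi>/2 < \<zeta> t" using upper[OF that] lower[OF that] by auto
    then show ?thesis unfolding Z_def abs_less_iff by linarith
  qed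
  have uder: "(u has_real_derivative (\<Sum>k = n..N. t powr (- real k / real q) * \<Lambda> k (u t))) (at t)"
    if t: "t > T" for t
  proof -
    have "u t \<in> {-r..r}" using ueq[of t] smallu[of t "\<zeta> t"] upper[of t] lower[of t] t \<xi>pos
      by (simp add: Z_def)
    then have "F t (u t) = (\<Sum>k = n..N. t powr (- real k / real q) * \<Lambda> k (u t))"
      by (simp add: F_def clid)
    then show ?thesis using u(3)[OF t] by simp
  qed
  have case1: "(\<lambda>t. t powr \<theta> * u t - \<xi>) \<in> O[at_top](\<lambda>_. 1)"
  proof (rule bigoI[where c = "\<xi>/2"])
    show "eventually (\<lambda>t. norm (t powr \<theta> * u t - \<xi>) \<le> \<xi>/2 * norm (1::real)) at_top"
      unfolding eventually_at_top_linorder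
      by (rule exI[of _ T]) (use \<zeta>bnd in \<open>auto simp: \<zeta>_def less_imp_le\<close>)
  qed

  have case2: "(\<lambda>t. t powr \<theta> * u t - \<xi>) \<in> O[at_top](\<lambda>t. t powr (- (1 - \<epsilon>) * min (min (1 / real q) \<theta>) \<bar>lam + \<theta>\<bar>))"
    if nq: "n = q" and eps: "0 < \<epsilon>" "\<epsilon> < 1" for \<epsilon>
  proof -
    define vk where "vk = min (min (1 / real q) \<theta>) \<bar>lam + \<theta>\<bar>"
    define \<gamma> where "\<gamma> = (1 - \<epsilon>) * vk"
    have akd: "a = lam + \<theta>" using nq by (simp add: a_def kdelta_def)
    have absa: "\<bar>a\<bar> = - a" using aneg by simp
    have vkpos: "vk > 0" using q0 \<theta>pos aneg akd by (auto simp: vk_def)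
    have vkq: "vk \<le> 1/real q" and vka: "vk \<le> \<bar>a\<bar>" by (auto simp: vk_def akd)
    have g0: "\<gamma> > 0" using eps vkpos by (simp add: \<gamma>_def)
    have glt: "\<gamma> < vk" using eps vkpos by (simp add: \<gamma>_def)
    have gq: "\<gamma> < 1/real q" and ga: "\<gamma> < \<bar>a\<bar>" using glt vkq vka by auto
    have evR: "eventually (\<lambda>t. K2 * t powr (-1/real q) < (\<bar>a\<bar> - \<gamma>) * \<xi> / 2) at_top"
      by (rule ev_small) (use q_pos ga \<xi>pos in auto)
    obtain T2 where T2: "\<And>t. t \<ge> T2 \<Longrightarrow> K2 * wf t < (\<bar>a\<bar> - \<gamma>) * \<xi> / 2"
      using evR unfolding eventually_at_top_linorder wf_def by blast
    define Tg where "Tg = max T2 T"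
    have TgT: "Tg \<ge> T" and TgT2: "Tg \<ge> T2" by (auto simp: Tg_def)
    have Tg0: "Tg > 0" using TgT T1 by simp
    have KTg: "K2 * wf Tg < (\<bar>a\<bar> - \<gamma>) * \<xi> / 2" using T2 TgT2 by simp
    define c where "c = \<xi>/2 * Tg powr \<gamma>"
    have cpos: "c > 0" using \<xi>pos Tg0 by (simp add: c_def)
    have cTg: "c * Tg powr (-\<gamma>) = \<xi>/2" using Tg0 by (simp add: c_def powr_minus)
    have csmall: "c * t powr (-\<gamma>) \<le> \<xi>/2" if "t \<ge> Tg" for t
    proof -
      have "t powr (-\<gamma>) \<le> Tg powr (-\<gamma>)" using that Tg0 g0 by (intro powr_mono2') auto
      then have "c * t powr (-\<gamma>) \<le> c * Tg powr (-\<gamma>)" using cpos by (simp add: mult_left_mono)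
      then show ?thesis using cTg by simp
    qed
    have KI: "K2 * wf t < (\<bar>a\<bar> - \<gamma>) * (c * t powr (-\<gamma>))" if t: "t \<ge> Tg" for t
    proof -
      have t0: "t > 0" using t Tg0 by simp
      have split: "wf t = t powr (-\<gamma>) * t powr (\<gamma> - 1/real q)"
        unfolding wf_def using t0 by (simp add: powr_add[symmetric])
      have mono: "t powr (\<gamma> - 1/real q) \<le> Tg powr (\<gamma> - 1/real q)"
        using t Tg0 gq by (intro powr_mono2') auto
      have split2: "Tg powr (\<gamma> - 1/real q) = Tg powr \<gamma> * wf Tg"
        unfolding wf_def using Tg0 by (simp add: powr_add[symmetric])
      have "K2 * wf t = (K2 * t powr (-\<gamma>)) * t powr (\<gamma> - 1/real q)" by (simp add: split mult_ac)
      also have "\<dots> \<le> (K2 * t powr (-\<gamma>)) * (Tg powr \<gamma> * wf Tg)"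
        using mono K2pos t0 unfolding split2 by (intro mult_left_mono) auto
      also have "\<dots> = (t powr (-\<gamma>) * Tg powr \<gamma>) * (K2 * wf Tg)" by (simp add: mult_ac)
      also have "\<dots> < (t powr (-\<gamma>) * Tg powr \<gamma>) * ((\<bar>a\<bar> - \<gamma>) * \<xi> / 2)"
        using KTg t0 Tg0 by (intro mult_strict_left_mono) auto
      also have "\<dots> = (\<bar>a\<bar> - \<gamma>) * (c * t powr (-\<gamma>))" by (simp add: c_def mult_ac)
      finally show ?thesis .
    qed
    have cder: "((\<lambda>s. c * s powr (-\<gamma>)) has_real_derivative c * (-\<gamma> * t powr (-\<gamma> - 1))) (at t)"
      if "t > 0" for t
      by (rule DERIV_cmult[OF has_real_derivative_powr[OF that]])
    have tinv: "t powr (-\<gamma> - 1) = t powr (-\<gamma>) / t" if "t > 0" for t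
      using that by (simp add: powr_diff)
    have wq: "(wf t)^n = 1/t" if "t > 0" for t
      using pw[OF that, of q] q0 nq that by (simp add: powr_minus divide_inverse)
    have key: "(1/t) * (K2 * wf t - (\<bar>a\<bar> - \<gamma>) * (c * t powr (-\<gamma>))) < 0" if "t \<ge> Tg" for t
      using KI[OF that] that Tg0 by (intro mult_pos_neg) auto
    have rup: "\<zeta> t - \<xi> - c * t powr (-\<gamma>) < 0" if t: "t \<ge> Tg" for t
    proof (rule comparison[OF _ _ _ t])
      show "continuous_on {Tg..} (\<lambda>s. \<zeta> s - \<xi> - c * s powr (-\<gamma>))"
        using Tg0 TgT by (intro continuous_intros continuous_on_subset[OF \<zeta>cont]) auto
      show "\<zeta> Tg - \<xi> - c * Tg powr (-\<gamma>) < 0" using upper[OF TgT] cTg by (simp add: Z_def)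
    next
      fix s assume s: "s > Tg" "\<zeta> s - \<xi> - c * s powr (-\<gamma>) = 0"
      define X where "X = c * s powr (-\<gamma>)"
      define W where "W = \<xi> + X"
      have s0: "s > 0" and sT: "s > T" using s TgT Tg0 by auto
      have X0: "X > 0" using cpos s0 by (simp add: X_def)
      have W: "\<zeta> s = W" "0 < W" "W \<le> Z" using s(2) csmall[of s] s(1) X0 \<xi>pos
        by (auto simp: W_def Z_def X_def)
      have d: "((\<lambda>s. \<zeta> s - \<xi> - c * s powr (-\<gamma>)) has_real_derivative E s W - 0 - c * (-\<gamma> * s powr (-\<gamma> - 1))) (at s)"
        by (intro DERIV_diff \<zeta>E[OF sT W] DERIV_const cder s0)
      have "E s W \<le> (wf s)^n * (a*W + \<mu> + K2 * wf s)" using KEt[of s W] sT W by simp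
      also have "\<dots> = (1/s) * (a * X + K2 * wf s)"
      proof -
        have aW: "a*W + \<mu> = a*X" using a\<xi> by (simp add: W_def algebra_simps)
        show ?thesis unfolding wq[OF s0] aW ..
      qed
      finally have "E s W - 0 - c * (-\<gamma> * s powr (-\<gamma> - 1)) \<le> (1/s) * (a * X + K2 * wf s) + \<gamma> * X / s"
        by (simp add: tinv[OF s0] X_def mult_ac)
      also have "\<dots> = (1/s) * (K2 * wf s - (\<bar>a\<bar> - \<gamma>) * X)" using s0 by (simp add: absa field_simps)
      also have "\<dots> < 0" using key[of s] s(1) by (simp add: X_def)
      finally show "\<exists>d<0. ((\<lambda>s. \<zeta> s - \<xi> - c * s powr (-\<gamma>)) has_real_derivative d) (at s)"
        using d by blast
    qed
    have rlow: "\<xi> - c * t powr (-\<gamma>) - \<zeta> t < 0" if t: "t \<ge> Tg" for t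
    proof (rule comparison[OF _ _ _ t])
      show "continuous_on {Tg..} (\<lambda>s. \<xi> - c * s powr (-\<gamma>) - \<zeta> s)"
        using Tg0 TgT by (intro continuous_intros continuous_on_subset[OF \<zeta>cont]) auto
      show "\<xi> - c * Tg powr (-\<gamma>) - \<zeta> Tg < 0" using lower[OF TgT] cTg by simp
    next
      fix s assume s: "s > Tg" "\<xi> - c * s powr (-\<gamma>) - \<zeta> s = 0"
      define X where "X = c * s powr (-\<gamma>)"
      define W where "W = \<xi> - X"
      have s0: "s > 0" and sT: "s > T" using s TgT Tg0 by auto
      have X0: "X > 0" using cpos s0 by (simp add: X_def)
      have W: "\<zeta> s = W" "0 < W" "W \<le> Z" using s(2) csmall[of s] s(1) X0 \<xi>pos
        by (auto simp: W_def Z_def X_def)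
      have d: "((\<lambda>s. \<xi> - c * s powr (-\<gamma>) - \<zeta> s) has_real_derivative 0 - c * (-\<gamma> * s powr (-\<gamma> - 1)) - E s W) (at s)"
        by (intro DERIV_diff \<zeta>E[OF sT W] DERIV_const cder s0)
      have "(1/s) * (- (a * X) - K2 * wf s) = (wf s)^n * (a*W + \<mu> - K2 * wf s)"
      proof -
        have aW: "a*W + \<mu> = - (a*X)" using a\<xi> by (simp add: W_def algebra_simps)
        show ?thesis unfolding wq[OF s0] aW ..
      qed
      also have "\<dots> \<le> E s W" using KEt[of s W] sT W by simp
      finally have "0 - c * (-\<gamma> * s powr (-\<gamma> - 1)) - E s W \<le> \<gamma> * X / s - (1/s) * (- (a * X) - K2 * wf s)"
        by (simp add: tinv[OF s0] X_def mult_ac)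
      also have "\<dots> = (1/s) * (K2 * wf s - (\<bar>a\<bar> - \<gamma>) * X)" using s0 by (simp add: absa field_simps)
      also have "\<dots> < 0" using key[of s] s(1) by (simp add: X_def)
      finally show "\<exists>d<0. ((\<lambda>s. \<xi> - c * s powr (-\<gamma>) - \<zeta> s) has_real_derivative d) (at s)"
        using d by blast
    qed
    have gg: "- (1 - \<epsilon>) * vk = - \<gamma>" by (simp add: \<gamma>_def algebra_simps)
    show ?thesis unfolding vk_def[symmetric] gg
    proof (rule bigoI[where c = c])
      show "eventually (\<lambda>t. norm (t powr \<theta> * u t - \<xi>) \<le> c * norm (t powr (-\<gamma>))) at_top"
        unfolding eventually_at_top_linorder
      proof (rule exI[of _ Tg], intro allI impI)
        fix t assume t: "t \<ge> Tg"
        have "\<bar>\<zeta> t - \<xi>\<bar> \<le> c * t powr (-\<gamma>)" using rup[OF t] rlow[OF t] by auto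
        then show "norm (t powr \<theta> * u t - \<xi>) \<le> c * norm (t powr (-\<gamma>))"
          by (simp add: \<zeta>_def)
      qed
    qed
  qed
  have main: "\<exists>u :: real \<Rightarrow> real. \<exists>T. T > 0 \<and>
          (\<forall>t > T. (u has_real_derivative
              (\<Sum>k = n..N. t powr (- real k / real q) * \<Lambda> k (u t))) (at t)) \<and>
          (n < q \<longrightarrow> (\<lambda>t. t powr \<theta> * u t - \<xi>) \<in> O[at_top](\<lambda>_. 1)) \<and>
          (n = q \<longrightarrow> (\<forall>\<epsilon>. 0 < \<epsilon> \<and> \<epsilon> < 1 \<longrightarrow>
              (\<lambda>t. t powr \<theta> * u t - \<xi>) \<in>
                 O[at_top](\<lambda>t. t powr (- (1 - \<epsilon>) * min (min (1 / real q) \<theta>) \<bar>lam + \<theta>\<bar>))))"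
    using uder case1 case2 T1 by (intro exI[of _ u] exI[of _ T]) auto
  show ?thesis unfolding Let_def \<theta>_def[symmetric] \<xi>_def[symmetric] by (rule main)

qed
end
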